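(* Let $v_1,v_2\in\mathbb{R}^2$ be two linearly independent unit vectors, and let $\xi\in\mathbb{R}^2$ satisfy $d_1:=\langle v_1,\xi\rangle\ge0$ and $d_2:=\langle v_2,\xi\rangle\ge 0$. Define $$\gamma_{12}:=\Pr\{\langle X,v_1\rangle\le 0,\ \langle X,v_2\rangle\le0\}\quad\text{for } X\sim\mathcal{N}(\xi,I).$$ Then $\alpha_{12}:=\langle v_1,v_2\rangle$ is identifiable from $d_1,d_2,\gamma_{12}$. That is, if $(v_1',v_2',\xi')$ is another triple satisfying the same hypotheses with the same values of $d_1,d_2,\gamma_{12}$, then $\langle v_1',v_2'\rangle=\langle v_1,v_2\rangle$. *)

theory Defs
  imports "HOL-Probability.Probability"
begin

definition gauss2 :: "real^2 \<Rightarrow> (real^2) measure" where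
  "gauss2 xi = density lborel (\<lambda>x. ennreal (exp (- (norm (x - xi))\<^sup>2 / 2) / (2 * pi)))"

definition gamma12 :: "real^2 \<Rightarrow> real^2 \<Rightarrow> real^2 \<Rightarrow> real" where
  "gamma12 v1 v2 xi = measure (gauss2 xi) {x. x \<bullet> v1 \<le> 0 \<and> x \<bullet> v2 \<le> 0}"

definition admissible :: "real^2 \<Rightarrow> real^2 \<Rightarrow> real^2 \<Rightarrow> bool" where
  "admissible v1 v2 xi \<longleftrightarrow> norm v1 = 1 \<and> norm v2 = 1 \<and> v1 \<noteq> v2 \<and>
     independent {v1, v2} \<and> v1 \<bullet> xi \<ge> 0 \<and> v2 \<bullet> xi \<ge> 0"

end

theory Submission
  imports Defs
begin

lemma card_Basis_2: "card (Basis :: (real^2) set) = 2"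
  by simp

lemma gauss2_density_prod:
  fixes x xi :: "real^2"
  shows "exp (- (norm (x - xi))\<^sup>2 / 2) / (2 * pi) = (\<Prod>b\<in>Basis. normal_density (xi \<bullet> b) 1 (x \<bullet> b))"
proof -
  have "(norm (x - xi))\<^sup>2 = (x - xi) \<bullet> (x - xi)" by (simp add: power2_norm_eq_inner)
  also have "\<dots> = (\<Sum>b\<in>Basis. ((x - xi) \<bullet> b) * ((x - xi) \<bullet> b))" by (rule euclidean_inner)
  also have "\<dots> = (\<Sum>b\<in>Basis. (x \<bullet> b - xi \<bullet> b)\<^sup>2)" by (simp add: inner_diff_left power2_eq_square)
  finally have n: "(norm (x - xi))\<^sup>2 = (\<Sum>b\<in>Basis. (x \<bullet> b - xi \<bullet> b)\<^sup>2)" .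
  have "(\<Prod>b\<in>(Basis::(real^2) set). normal_density (xi \<bullet> b) 1 (x \<bullet> b))
      = (\<Prod>b\<in>(Basis::(real^2) set). (1 / sqrt (2 * pi)) * exp (- (x \<bullet> b - xi \<bullet> b)\<^sup>2 / 2))"
    by (simp add: normal_density_def power2_commute)
  also have "\<dots> = (1 / sqrt (2 * pi)) ^ 2 * exp (\<Sum>b\<in>Basis. - (x \<bullet> b - xi \<bullet> b)\<^sup>2 / 2)"
    by (simp only: prod.distrib prod_constant card_Basis_2) (simp add: exp_sum)
  also have "\<dots> = exp (- (norm (x - xi))\<^sup>2 / 2) / (2 * pi)"
    by (simp add: n sum_divide_distrib[symmetric] sum_negf power_divide)
  finally show ?thesis by simp
qed

lemma gauss2_prob: "prob_space (gauss2 xi)"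
proof
  have "emeasure (gauss2 xi) (space (gauss2 xi)) =
     (\<integral>\<^sup>+x. (\<Prod>b\<in>Basis. ennreal (normal_density (xi \<bullet> b) 1 (x \<bullet> b))) \<partial>lborel)"
    unfolding gauss2_def gauss2_density_prod
    by (simp add: emeasure_density prod_ennreal)
  also have "\<dots> = (\<Prod>b\<in>(Basis::(real^2) set). (\<integral>\<^sup>+t. ennreal (normal_density (xi \<bullet> b) 1 t) \<partial>lborel))"
    apply (rule nn_integral_lborel_prod)
    apply auto
    done
  also have "\<dots> = 1"
  proof (rule prod.neutral, intro ballI)
    fix b :: "real^2"
    interpret p: prob_space "density lborel (normal_density (xi \<bullet> b) 1)"
      by (rule prob_space_normal_density) simp
    show "(\<integral>\<^sup>+t. ennreal (normal_density (xi \<bullet> b) 1 t) \<partial>lborel) = 1"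
      using p.emeasure_space_1 by (simp add: emeasure_density)
  qed
  finally show "emeasure (gauss2 xi) (space (gauss2 xi)) = 1" .
qed

definition hh :: "real^2 \<Rightarrow> real^2 \<Rightarrow> real^2" where
  "hh w z = z - (2 * (z \<bullet> w) / (w \<bullet> w)) *\<^sub>R w"

lemma hh_inv: "w \<noteq> 0 \<Longrightarrow> hh w (hh w z) = z"
  by (simp add: hh_def inner_diff_left algebra_simps)

lemma hh_inner: "w \<noteq> 0 \<Longrightarrow> hh w a \<bullet> b = a \<bullet> hh w b"
  by (simp add: hh_def inner_diff_left inner_diff_right algebra_simps inner_commute)

lemma hh_linear: "linear (hh w)"
  by (rule linearI) (simp_all add: hh_def inner_add_left algebra_simps add_divide_distrib scaleR_add_left)

lemma hh_orth: "w \<noteq> 0 \<Longrightarrow> orthogonal_transformation (hh w)"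
  unfolding orthogonal_transformation_def
  using hh_linear hh_inner hh_inv by metis

lemma hh_meas[measurable]: "hh w \<in> borel_measurable borel"
  using hh_linear by (simp add: borel_measurable_continuous_onI linear_continuous_on linear_linear)

lemma hh_norm: "w \<noteq> 0 \<Longrightarrow> norm (hh w z) = norm z"
  using hh_orth orthogonal_transformation_norm by blast

lemma hh_distr: assumes w: "w \<noteq> 0" shows "distr lborel borel (hh w) = lborel"
proof (rule lborel_eqI[symmetric])
  show "sets (distr lborel borel (hh w)) = sets borel" by simp
  fix l u :: "real^2"
  assume le: "\<And>b. b \<in> Basis \<Longrightarrow> l \<bullet> b \<le> u \<bullet> b"
  let ?B = "box l u"
  have pre: "hh w -` ?B = hh w ` ?B"
    using hh_inv[OF w] by (auto simp: image_iff) (metis)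
  have Bm: "hh w -` ?B \<in> sets borel" by (rule measurable_sets_borel[OF hh_meas]) simp
  have bd: "bounded (hh w ` ?B)"
    using hh_linear by (intro bounded_linear_image) (auto simp: linear_linear)
  have "emeasure (distr lborel borel (hh w)) ?B = emeasure lborel (hh w ` ?B)"
    by (simp add: emeasure_distr pre[symmetric])
  also have "\<dots> = ennreal (measure lborel (hh w ` ?B))"
    using emeasure_bounded_finite[OF bd] by (intro emeasure_eq_ennreal_measure) simp
  also have "measure lborel (hh w ` ?B) = measure lebesgue (hh w ` ?B)"
    using Bm pre by (metis measure_completion sets_lborel)
  also have "\<dots> = measure lebesgue ?B"
    by (rule measure_orthogonal_image[OF hh_orth[OF w]]) simp
  also have "\<dots> = measure lborel ?B" by simp
  also have "ennreal \<dots> = emeasure lborel ?B"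
    by (rule emeasure_eq_ennreal_measure[symmetric]) (use emeasure_bounded_finite[of "box l u"] in simp)
  finally show "emeasure (distr lborel borel (hh w)) ?B = (\<Prod>b\<in>Basis. (u - l) \<bullet> b)"
    using le by (simp add: emeasure_lborel_box_eq)
qed

lemma gauss2_transport:
  fixes h :: "real^2 \<Rightarrow> real^2"
  assumes hm: "h \<in> borel_measurable borel" and hd: "distr lborel borel h = lborel"
    and nh: "\<And>z. norm (h z - y) = norm (z - xi)" and S: "S \<in> sets borel"
  shows "measure (gauss2 xi) (h -` S) = measure (gauss2 y) S"
proof -
  let ?f = "\<lambda>y x. ennreal (exp (- (norm (x - y))\<^sup>2 / 2) / (2 * pi))"
  have hS: "h -` S \<in> sets borel" by (rule measurable_sets_borel[OF hm S])
  have "emeasure (gauss2 y) S = (\<integral>\<^sup>+x. ?f y x * indicator S x \<partial>lborel)"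
    unfolding gauss2_def by (rule emeasure_density) (use S in auto)
  also have "\<dots> = (\<integral>\<^sup>+x. ?f y x * indicator S x \<partial>(distr lborel borel h))" by (simp add: hd)
  also have "\<dots> = (\<integral>\<^sup>+z. ?f y (h z) * indicator S (h z) \<partial>lborel)"
    by (rule nn_integral_distr) (use hm S in auto)
  also have "\<dots> = (\<integral>\<^sup>+z. ?f xi z * indicator (h -` S) z \<partial>lborel)"
    by (simp add: nh indicator_def)
  also have "\<dots> = emeasure (gauss2 xi) (h -` S)"
    unfolding gauss2_def by (rule emeasure_density[symmetric]) (use hS in auto)
  finally show ?thesis by (simp add: measure_def)
qed

lemma gauss2_pos:
  assumes U: "open U" "z0 \<in> U"
  shows "0 < measure (gauss2 xi) U"
proof -
  interpret prob_space "gauss2 xi" by (rule gauss2_prob)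
  obtain r where r: "r > 0" "ball z0 r \<subseteq> U" using U open_contains_ball by blast
  let ?f = "\<lambda>x. ennreal (exp (- (norm (x - xi))\<^sup>2 / 2) / (2 * pi))"
  have Um: "U \<in> sets (gauss2 xi)" using U by (simp add: gauss2_def borel_open)
  have bm: "ball z0 r \<in> sets (gauss2 xi)" by (simp add: gauss2_def)
  have "emeasure (gauss2 xi) (ball z0 r) \<noteq> 0"
  proof
    assume "emeasure (gauss2 xi) (ball z0 r) = 0"
    then have "(\<integral>\<^sup>+x. ?f x * indicator (ball z0 r) x \<partial>lborel) = 0"
      unfolding gauss2_def by (subst (asm) emeasure_density) auto
    then have "AE x in lborel. ?f x * indicator (ball z0 r) x = 0"
      by (subst (asm) nn_integral_0_iff_AE) (measurable, simp add: pred_def borel_open)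
    then have "AE x in lborel. x \<notin> ball z0 r"
      by eventually_elim (auto simp: indicator_def)
    then have "ball z0 r \<in> null_sets lborel"
      by (subst AE_iff_null_sets) auto
    then have "measure lborel (ball z0 r) = 0" by (simp add: measure_def null_setsD1)
    with content_ball_pos[OF r(1)] show False by simp
  qed
  then have "0 < measure (gauss2 xi) (ball z0 r)"
    by (simp add: emeasure_eq_measure less_le)
  also have "\<dots> \<le> measure (gauss2 xi) U"
    using r Um by (intro finite_measure_mono) auto
  finally show ?thesis .
qed

lemma sets_gauss2[simp, measurable_cong]: "sets (gauss2 xi) = sets borel"
  by (simp add: gauss2_def)

lemma key:
  fixes c p q :: "real^2" and d1 d2 :: real
  assumes p: "norm p = 1" and q: "norm q = 1" and cpq: "c \<bullet> q < c \<bullet> p"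
  shows "measure (gauss2 0) {z. z \<bullet> c \<le> -d1 \<and> z \<bullet> q \<le> -d2}
       < measure (gauss2 0) {z. z \<bullet> c \<le> -d1 \<and> z \<bullet> p \<le> -d2}"
proof -
  interpret prob_space "gauss2 0" by (rule gauss2_prob)
  define w where "w = q - p"
  have w0: "w \<noteq> 0" using cpq w_def by auto
  have pp: "p \<bullet> p = 1" "q \<bullet> q = 1" using p q by (simp_all add: norm_eq_1)
  have ww: "w \<bullet> w = 2 - 2 * (p \<bullet> q)"
    by (simp add: w_def inner_diff_left inner_diff_right pp inner_commute)
  have wpos: "w \<bullet> w > 0" using w0 by simp
  have pq1: "p \<bullet> q < 1" using ww wpos by simp
  have sp: "hh w p = q"
  proof -
    have "p \<bullet> w = p \<bullet> q - 1" by (simp add: w_def inner_diff_right pp)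
    then have e: "2 * (p \<bullet> w) = - (w \<bullet> w)" using ww by linarith
    then have c1: "2 * (p \<bullet> w) / (w \<bullet> w) = -1" using wpos by (simp add: e)
    have "hh w p = p + w" by (simp add: hh_def c1)
    then show ?thesis by (simp add: w_def)
  qed
  have sq: "hh w q = p"
  proof -
    have "q \<bullet> w = 1 - p \<bullet> q" by (simp add: w_def inner_diff_right pp inner_commute)
    then have e: "2 * (q \<bullet> w) = (w \<bullet> w)" using ww by linarith
    then have c1: "2 * (q \<bullet> w) / (w \<bullet> w) = 1" using wpos by (simp add: e)
    have "hh w q = q - w" by (simp add: hh_def c1)
    then show ?thesis by (simp add: w_def)
  qed
  define sc where "sc = hh w c"
  have sc_in: "z \<bullet> sc = z \<bullet> c - (2 * (c \<bullet> w) / (w \<bullet> w)) * (z \<bullet> w)" for z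
    by (simp add: sc_def hh_def inner_diff_right inner_commute)
  have cw: "c \<bullet> w < 0" using cpq by (simp add: w_def inner_diff_right)
  have coef: "2 * (c \<bullet> w) / (w \<bullet> w) < 0" using cw wpos by (simp add: divide_neg_pos)
  define Pd where "Pd = {z. z \<bullet> c \<le> -d1 \<and> z \<bullet> p \<le> -d2 \<and> \<not> z \<bullet> q \<le> -d2}"
  define Qd where "Qd = {z. z \<bullet> c \<le> -d1 \<and> z \<bullet> q \<le> -d2 \<and> \<not> z \<bullet> p \<le> -d2}"
  define Rd where "Rd = {z. z \<bullet> sc \<le> -d1 \<and> z \<bullet> p \<le> -d2 \<and> \<not> z \<bullet> q \<le> -d2}"
  define E where "E = {z. z \<bullet> c \<le> -d1 \<and> z \<bullet> p \<le> -d2 \<and> z \<bullet> q \<le> -d2}"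
  define U where "U = {z. z \<bullet> c < -d1 \<and> z \<bullet> p < -d2 \<and> -d2 < z \<bullet> q \<and> -d1 < z \<bullet> sc}"
  have mP: "Pd \<in> sets (gauss2 0)" unfolding Pd_def by measurable
  have mQ: "Qd \<in> sets (gauss2 0)" unfolding Qd_def by measurable
  have mR: "Rd \<in> sets borel" unfolding Rd_def by measurable
  have mE: "E \<in> sets (gauss2 0)" unfolding E_def by measurable
  have oU: "open U" unfolding U_def
    by (intro open_Collect_conj open_Collect_less continuous_intros)
  have mU: "U \<in> sets (gauss2 0)" using oU by (simp add: borel_open)
  have eqQ: "Qd = hh w -` Rd"
    using hh_inner[OF w0] hh_inv[OF w0] sp sq
    by (auto simp: Qd_def Rd_def sc_def)
  have QR: "measure (gauss2 0) Qd = measure (gauss2 0) Rd"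
    unfolding eqQ
    by (rule gauss2_transport[OF hh_meas hh_distr[OF w0]]) (simp_all add: hh_norm w0 mR)
  have subR: "Rd \<subseteq> Pd"
  proof
    fix z assume z: "z \<in> Rd"
    then have "z \<bullet> w > 0" by (auto simp: Rd_def w_def inner_diff_right)
    then have "(2 * (c \<bullet> w) / (w \<bullet> w)) * (z \<bullet> w) < 0" by (intro mult_neg_pos coef)
    then show "z \<in> Pd" using z sc_in[of z] by (auto simp: Rd_def Pd_def)
  qed
  have subU: "U \<subseteq> Pd" by (auto simp: U_def Pd_def)
  have disj: "Rd \<inter> U = {}" by (auto simp: U_def Rd_def)
  obtain t where t: "t * (- (c \<bullet> w)) > \<bar>d1\<bar>" "t * (1 - p \<bullet> q) > \<bar>d2\<bar>" "t > 0"
  proof -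
    define a where "a = - (c \<bullet> w)"
    define b where "b = 1 - p \<bullet> q"
    have a: "a > 0" and b: "b > 0" using cw pq1 by (auto simp: a_def b_def)
    define t where "t = (\<bar>d1\<bar> + 1) / a + (\<bar>d2\<bar> + 1) / b"
    have "t * a = \<bar>d1\<bar> + 1 + (\<bar>d2\<bar> + 1) * a / b" using a b by (simp add: t_def field_simps)
    moreover have "(\<bar>d2\<bar> + 1) * a / b \<ge> 0" using a b by simp
    moreover have "t * b = \<bar>d2\<bar> + 1 + (\<bar>d1\<bar> + 1) * b / a" using a b by (simp add: t_def field_simps)
    moreover have "(\<bar>d1\<bar> + 1) * b / a \<ge> 0" using a b by simp
    moreover have "t > 0" using a b by (simp add: t_def add_pos_pos)
    ultimately show ?thesis using that[of t] by (simp add: a_def b_def)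
  qed
  have inU: "t *\<^sub>R w \<in> U"
  proof -
    have "(t *\<^sub>R w) \<bullet> c = - (t * (- (c \<bullet> w)))" by (simp add: inner_commute)
    moreover have "(t *\<^sub>R w) \<bullet> p = - (t * (1 - p \<bullet> q))" by (simp add: w_def inner_diff_left pp inner_commute algebra_simps)
    moreover have "(t *\<^sub>R w) \<bullet> q = t * (1 - p \<bullet> q)" by (simp add: w_def inner_diff_left pp inner_commute algebra_simps)
    moreover have "(t *\<^sub>R w) \<bullet> sc = t * (- (c \<bullet> w))"
      unfolding sc_in using wpos by (simp add: inner_commute[of w c] field_simps)
    ultimately show ?thesis using t by (auto simp: U_def)
  qed
  have Upos: "0 < measure (gauss2 0) U" by (rule gauss2_pos[OF oU inU])
  have "measure (gauss2 0) Rd + measure (gauss2 0) U = measure (gauss2 0) (Rd \<union> U)"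
    using mR mU disj by (intro finite_measure_Union[symmetric]) auto
  also have "\<dots> \<le> measure (gauss2 0) Pd"
    using subR subU mP by (intro finite_measure_mono) auto
  finally have PR: "measure (gauss2 0) Qd < measure (gauss2 0) Pd" using Upos QR by simp
  have "{z. z \<bullet> c \<le> -d1 \<and> z \<bullet> q \<le> -d2} = E \<union> Qd" by (auto simp: E_def Qd_def)
  then have A: "measure (gauss2 0) {z. z \<bullet> c \<le> -d1 \<and> z \<bullet> q \<le> -d2} = measure (gauss2 0) E + measure (gauss2 0) Qd"
    using mE mQ by (simp add: finite_measure_Union, subst finite_measure_Union) (auto simp: E_def Qd_def)
  have "{z. z \<bullet> c \<le> -d1 \<and> z \<bullet> p \<le> -d2} = E \<union> Pd" by (auto simp: E_def Pd_def)
  then have B: "measure (gauss2 0) {z. z \<bullet> c \<le> -d1 \<and> z \<bullet> p \<le> -d2} = measure (gauss2 0) E + measure (gauss2 0) Pd"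
    using mE mP by (simp, subst finite_measure_Union) (auto simp: E_def Pd_def)
  show ?thesis using A B PR by simp
qed

lemma gamma_Q: "gamma12 v1 v2 xi = measure (gauss2 0) {z. z \<bullet> v1 \<le> -(v1 \<bullet> xi) \<and> z \<bullet> v2 \<le> -(v2 \<bullet> xi)}"
proof -
  have "(+) xi -` {x. x \<bullet> v1 \<le> 0 \<and> x \<bullet> v2 \<le> 0} = {z. z \<bullet> v1 \<le> -(v1 \<bullet> xi) \<and> z \<bullet> v2 \<le> -(v2 \<bullet> xi)}"
    by (auto simp: inner_add_left inner_commute[of xi])
  moreover have "measure (gauss2 0) ((+) xi -` {x. x \<bullet> v1 \<le> 0 \<and> x \<bullet> v2 \<le> 0}) = measure (gauss2 xi) {x. x \<bullet> v1 \<le> 0 \<and> x \<bullet> v2 \<le> 0}"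
    by (rule gauss2_transport) (simp_all add: lborel_distr_plus)
  ultimately show ?thesis by (simp add: gamma12_def)
qed

lemma hh_swap:
  fixes p q :: "real^2"
  assumes p: "norm p = 1" and q: "norm q = 1" and pq: "p \<noteq> q"
  shows "hh (q - p) p = q" "hh (q - p) q = p"
proof -
  define w where "w = q - p"
  have w0: "w \<noteq> 0" using pq w_def by auto
  have pp: "p \<bullet> p = 1" "q \<bullet> q = 1" using p q by (simp_all add: norm_eq_1)
  have ww: "w \<bullet> w = 2 - 2 * (p \<bullet> q)"
    by (simp add: w_def inner_diff_left inner_diff_right pp inner_commute)
  have wpos: "w \<bullet> w > 0" using w0 by simp
  have "p \<bullet> w = p \<bullet> q - 1" by (simp add: w_def inner_diff_right pp)
  then have e: "2 * (p \<bullet> w) = - (w \<bullet> w)" using ww by linarith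
  then have c1: "2 * (p \<bullet> w) / (w \<bullet> w) = -1" using wpos by (simp add: e)
  have "hh w p = p + w" by (simp add: hh_def c1)
  then show "hh (q - p) p = q" by (simp add: w_def)
  have "q \<bullet> w = 1 - p \<bullet> q" by (simp add: w_def inner_diff_right pp inner_commute)
  then have e: "2 * (q \<bullet> w) = (w \<bullet> w)" using ww by linarith
  then have c1: "2 * (q \<bullet> w) / (w \<bullet> w) = 1" using wpos by (simp add: e)
  have "hh w q = q - w" by (simp add: hh_def c1)
  then show "hh (q - p) q = p" by (simp add: w_def)
qed

lemma align:
  fixes a b p :: "real^2"
  assumes a: "norm a = 1" and b: "norm b = 1"
  shows "\<exists>q. norm q = norm p \<and> b \<bullet> q = a \<bullet> p \<and>
    measure (gauss2 0) {z. z \<bullet> a \<le> d1 \<and> z \<bullet> p \<le> d2} = measure (gauss2 0) {z. z \<bullet> b \<le> d1 \<and> z \<bullet> q \<le> d2}"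
proof (cases "a = b")
  case True then show ?thesis by auto
next
  case False
  define w where "w = b - a"
  have w0: "w \<noteq> 0" using False w_def by auto
  have sa: "hh w a = b" "hh w b = a" using hh_swap[OF a b False] by (simp_all add: w_def)
  define q where "q = hh w p"
  have "norm q = norm p" by (simp add: q_def hh_norm w0)
  moreover have "b \<bullet> q = a \<bullet> p"
  proof -
    have "hh w b \<bullet> p = b \<bullet> hh w p" by (rule hh_inner[OF w0])
    then show ?thesis using sa(2) by (simp add: q_def)
  qed
  moreover have e1: "hh w z \<bullet> b = z \<bullet> a" for z
    using hh_inner[OF w0, of z b] sa(2) by simp
  moreover have e2: "hh w z \<bullet> q = z \<bullet> p" for z
    using hh_inner[OF w0, of z q] hh_inv[OF w0, of p] by (simp add: q_def)
  ultimately have pre: "hh w -` {z. z \<bullet> b \<le> d1 \<and> z \<bullet> q \<le> d2} = {z. z \<bullet> a \<le> d1 \<and> z \<bullet> p \<le> d2}"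
    by simp
  have "measure (gauss2 0) (hh w -` {z. z \<bullet> b \<le> d1 \<and> z \<bullet> q \<le> d2}) = measure (gauss2 0) {z. z \<bullet> b \<le> d1 \<and> z \<bullet> q \<le> d2}"
    by (rule gauss2_transport[OF hh_meas hh_distr[OF w0]]) (simp_all add: hh_norm w0)
  then show ?thesis
    using pre \<open>norm q = norm p\<close> \<open>b \<bullet> q = a \<bullet> p\<close> by (intro exI[of _ q]) simp
qed

theorem lemma2:
  fixes v1 v2 xi v1' v2' xi' :: "real^2"
  assumes "admissible v1 v2 xi" and "admissible v1' v2' xi'"
    and "v1' \<bullet> xi' = v1 \<bullet> xi" and "v2' \<bullet> xi' = v2 \<bullet> xi"
    and "gamma12 v1' v2' xi' = gamma12 v1 v2 xi"
  shows "v1' \<bullet> v2' = v1 \<bullet> v2"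
proof -
  have n: "norm v1 = 1" "norm v2 = 1" "norm v1' = 1" "norm v2' = 1"
    using assms(1,2) unfolding admissible_def by blast+
  define D1 where "D1 = v1 \<bullet> xi"
  define D2 where "D2 = v2 \<bullet> xi"
  have g1: "gamma12 v1' v2' xi' = measure (gauss2 0) {z. z \<bullet> v1' \<le> -D1 \<and> z \<bullet> v2' \<le> -D2}"
    unfolding gamma_Q D1_def D2_def assms(3,4) ..
  have g2: "gamma12 v1 v2 xi = measure (gauss2 0) {z. z \<bullet> v1 \<le> -D1 \<and> z \<bullet> v2 \<le> -D2}"
    unfolding gamma_Q D1_def D2_def ..
  have g: "measure (gauss2 0) {z. z \<bullet> v1' \<le> -D1 \<and> z \<bullet> v2' \<le> -D2}
         = measure (gauss2 0) {z. z \<bullet> v1 \<le> -D1 \<and> z \<bullet> v2 \<le> -D2}"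
    using g1 g2 assms(5) by simp
  obtain q where q0: "norm q = norm v2'" and q2: "v1 \<bullet> q = v1' \<bullet> v2'"
    and q3: "measure (gauss2 0) {z. z \<bullet> v1' \<le> -D1 \<and> z \<bullet> v2' \<le> -D2}
         = measure (gauss2 0) {z. z \<bullet> v1 \<le> -D1 \<and> z \<bullet> q \<le> -D2}"
    using align[OF n(3) n(1), of v2' "-D1" "-D2"] by blast
  have q1: "norm q = 1" using q0 n(4) by simp
  show ?thesis
  proof (rule ccontr)
    assume ne: "v1' \<bullet> v2' \<noteq> v1 \<bullet> v2"
    show False
    proof (cases "v1 \<bullet> q < v1 \<bullet> v2")
      case True
      have "measure (gauss2 0) {z. z \<bullet> v1 \<le> -D1 \<and> z \<bullet> q \<le> -D2}
         < measure (gauss2 0) {z. z \<bullet> v1 \<le> -D1 \<and> z \<bullet> v2 \<le> -D2}"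
        by (rule key[OF n(2) q1 True])
      then show False using g q3 by linarith
    next
      case False
      then have lt: "v1 \<bullet> v2 < v1 \<bullet> q" using ne q2 by linarith
      have "measure (gauss2 0) {z. z \<bullet> v1 \<le> -D1 \<and> z \<bullet> v2 \<le> -D2}
         < measure (gauss2 0) {z. z \<bullet> v1 \<le> -D1 \<and> z \<bullet> q \<le> -D2}"
        by (rule key[OF q1 n(2) lt])
      then show False using g q3 by linarith
    qed
  qed
qed

end
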